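(* Let $n,k,d$ be positive integers with $k\le d<n$, let $\alpha>0$, and for each integer $M\ge 0$ set $n_M=n+M$, $k_M=k+M$, $d_M=d+M$. Let $g_M:[1,k_M]\to\mathbb{R}$ be the piecewise linear function with $g_M(i)=\frac{n_M i\alpha}{n-k+i}$ at the integers $i=1,\dots,k_M$, linear between consecutive integers. Let $s\in(0,1]$ be fixed and put $i_M=1+s(k_M-1)$. Then $$ \lim_{M\to\infty}\frac{g_M(i_M)}{C_{k_M,d_M}\!\left(\alpha,\frac{(d_M-k_M+i_M)\alpha}{d_M-k_M+1}\right)}=1, $$ where for positive integers $k\le d$ and $\alpha,\gamma>0$, $$ C_{k,d}(\alpha,\gamma)=\sum_{j=0}^{k-1}\min\left\{\alpha,\frac{d-j}{d}\gamma\right\}. $$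
   Context: $C_{k,d}(\alpha,\gamma)$ as defined in the claim is the known capacity of functional-repair regenerating codes with reconstruction degree $k$, repair degree $d$, node size $\alpha$ and total repair bandwidth $\gamma$; for this statement only the explicit formula matters. *)

theory Defs
  imports "HOL-Analysis.Analysis"
begin

definition capC :: "nat \<Rightarrow> nat \<Rightarrow> real \<Rightarrow> real \<Rightarrow> real" where
  "capC k d \<alpha> \<gamma> = (\<Sum>j<k. min \<alpha> ((real d - real j) / real d * \<gamma>))"

definition gval :: "nat \<Rightarrow> nat \<Rightarrow> real \<Rightarrow> nat \<Rightarrow> int \<Rightarrow> real" where
  "gval n k \<alpha> M i = real (n + M) * real_of_int i * \<alpha> / (real n - real k + real_of_int i)"

definition gM :: "nat \<Rightarrow> nat \<Rightarrow> real \<Rightarrow> nat \<Rightarrow> real \<Rightarrow> real" where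
  "gM n k \<alpha> M x =
     (let i = \<lfloor>x\<rfloor> in
      gval n k \<alpha> M i + (x - real_of_int i) * (gval n k \<alpha> M (i + 1) - gval n k \<alpha> M i))"

end

theory Submission
  imports Defs "HOL-Real_Asymp.Real_Asymp"
begin

lemma capC_upper:
  assumes "0 < \<alpha>"
  shows "capC K D \<alpha> \<gamma> \<le> real K * \<alpha>"
proof -
  have "capC K D \<alpha> \<gamma> \<le> (\<Sum>j<K. \<alpha>)"
    unfolding capC_def by (rule sum_mono) simp
  then show ?thesis by simp
qed

lemma card_gt_bound:
  assumes "0 \<le> B" "real K - x + 1 \<le> B"
  shows "real (card {j\<in>{..<K}. x < real j}) \<le> B"
proof (cases "nat \<lfloor>x\<rfloor> \<le> K")
  case True
  have sub: "{j\<in>{..<K}. x < real j} \<subseteq> {nat \<lfloor>x\<rfloor>..<K}"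
  proof
    fix j assume "j \<in> {j\<in>{..<K}. x < real j}"
    then have "j < K" "x < real j" by auto
    then have "\<lfloor>x\<rfloor> \<le> int j" by linarith
    then show "j \<in> {nat \<lfloor>x\<rfloor>..<K}" using \<open>j < K\<close> by auto
  qed
  have "card {j\<in>{..<K}. x < real j} \<le> card {nat \<lfloor>x\<rfloor>..<K}"
    by (rule card_mono[OF _ sub]) simp
  then have "real (card {j\<in>{..<K}. x < real j}) \<le> real K - real (nat \<lfloor>x\<rfloor>)"
    using True by simp
  also have "\<dots> \<le> real K - x + 1" by linarith
  finally show ?thesis using assms by linarith
next
  case False
  have "\<not> x < real j" if "j < K" for j
  proof -
    have "int K < \<lfloor>x\<rfloor>" using False by linarith
    then show ?thesis using that by linarith
  qed
  then have "{j\<in>{..<K}. x < real j} = {}" by auto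
  then show ?thesis using assms by (metis card.empty of_nat_0)
qed

lemma capC_lower:
  assumes "0 < \<alpha>" "0 < \<gamma>" "K \<le> D" "0 < D" "0 \<le> B"
    and "real K - (real D - real D * \<alpha> / \<gamma>) + 1 \<le> B"
  shows "real K * \<alpha> - \<alpha> * B \<le> capC K D \<alpha> \<gamma>"
proof -
  define x where "x = real D - real D * \<alpha> / \<gamma>"
  have trm: "\<alpha> - \<alpha> * (if x < real j then 1 else 0)
      \<le> min \<alpha> ((real D - real j) / real D * \<gamma>)" if "j < K" for j
  proof (cases "x < real j")
    case True
    have "0 \<le> (real D - real j) / real D * \<gamma>"
      using that assms by (intro mult_nonneg_nonneg divide_nonneg_nonneg) auto
    then show ?thesis using True assms by simp
  next
    case False
    then have "real D - real j \<ge> real D * \<alpha> / \<gamma>" unfolding x_def by simp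
    then have "(real D - real j) / real D * \<gamma> \<ge> (real D * \<alpha> / \<gamma>) / real D * \<gamma>"
      using assms by (intro mult_right_mono divide_right_mono) auto
    also have "(real D * \<alpha> / \<gamma>) / real D * \<gamma> = \<alpha>" using assms by simp
    finally show ?thesis using False by simp
  qed
  have "(\<Sum>j<K. \<alpha> - \<alpha> * (if x < real j then 1 else 0)) \<le> capC K D \<alpha> \<gamma>"
    unfolding capC_def using trm by (intro sum_mono) auto
  moreover have "(\<Sum>j<K. \<alpha> - \<alpha> * (if x < real j then 1 else 0))
      = real K * \<alpha> - \<alpha> * real (card {j\<in>{..<K}. x < real j})"
    by (simp add: sum_subtractf sum_distrib_left[symmetric] sum.If_cases)
      (simp add: Int_def lessThan_def)
  moreover have "real (card {j\<in>{..<K}. x < real j}) \<le> B"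
    using card_gt_bound[of B K x] assms unfolding x_def by simp
  ultimately show ?thesis using assms(1)
    by (smt (verit) mult_left_mono)
qed

lemma frac_mono:
  fixes c y1 y2 :: real
  assumes "0 < c" "0 \<le> y1" "y1 \<le> y2"
  shows "y1 / (c + y1) \<le> y2 / (c + y2)"
proof -
  have "y1 * (c + y2) \<le> y2 * (c + y1)" using assms by (simp add: algebra_simps mult_left_mono)
  then show ?thesis using assms by (simp add: divide_simps)
qed

lemma frac_le1:
  fixes c y :: real
  assumes "0 < c" "0 \<le> y"
  shows "y / (c + y) \<le> 1"
  using assms by (simp add: divide_simps)

lemma gM_bounds:
  assumes "k < n" "0 < \<alpha>" "1 \<le> x"
  shows "real (n+M) * \<alpha> * ((x-1)/((real n - real k)+(x-1))) \<le> gM n k \<alpha> M x"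
    and "gM n k \<alpha> M x \<le> real (n+M) * \<alpha>"
proof -
  define c where "c = real n - real k"
  have c: "0 < c" using assms unfolding c_def by simp
  define fl where "fl = \<lfloor>x\<rfloor>"
  have fl1: "1 \<le> fl" using assms unfolding fl_def by linarith
  have t: "0 \<le> x - real_of_int fl" "x - real_of_int fl \<le> 1" unfolding fl_def by linarith+
  have gv: "gval n k \<alpha> M i = real (n+M) * \<alpha> * (real_of_int i / (c + real_of_int i))" for i
    unfolding gval_def c_def by simp
  have N: "0 \<le> real (n+M) * \<alpha>" using assms by simp
  have mono: "gval n k \<alpha> M fl \<le> gval n k \<alpha> M (fl+1)"
    unfolding gv using fl1 c by (intro mult_left_mono[OF _ N] frac_mono) auto
  have le1: "gval n k \<alpha> M (fl+1) \<le> real (n+M) * \<alpha>"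
  proof -
    have "real_of_int (fl+1) / (c + real_of_int (fl+1)) \<le> 1"
      using fl1 c by (intro frac_le1) auto
    then have "real (n+M) * \<alpha> * (real_of_int (fl+1) / (c + real_of_int (fl+1))) \<le> real (n+M) * \<alpha> * 1"
      using N by (intro mult_left_mono) auto
    then show ?thesis unfolding gv by simp
  qed
  have geq: "gM n k \<alpha> M x = gval n k \<alpha> M fl + (x - real_of_int fl) * (gval n k \<alpha> M (fl+1) - gval n k \<alpha> M fl)"
    unfolding gM_def fl_def Let_def by simp
  have lo: "gval n k \<alpha> M fl \<le> gM n k \<alpha> M x"
    unfolding geq using mono t by simp
  have hi: "gM n k \<alpha> M x \<le> gval n k \<alpha> M (fl+1)"
  proof -
    have "(x - real_of_int fl) * (gval n k \<alpha> M (fl+1) - gval n k \<alpha> M fl)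
        \<le> 1 * (gval n k \<alpha> M (fl+1) - gval n k \<alpha> M fl)"
      using mono t by (intro mult_right_mono) auto
    then show ?thesis unfolding geq by simp
  qed
  show "gM n k \<alpha> M x \<le> real (n+M) * \<alpha>" using hi le1 by simp
  have "(x-1)/(c+(x-1)) \<le> real_of_int fl / (c + real_of_int fl)"
    using assms c unfolding fl_def by (intro frac_mono) linarith+
  then have "real (n+M) * \<alpha> * ((x-1)/(c+(x-1))) \<le> gval n k \<alpha> M fl"
    unfolding gv using N by (intro mult_left_mono) auto
  then show "real (n+M) * \<alpha> * ((x-1)/((real n - real k)+(x-1))) \<le> gM n k \<alpha> M x"
    using lo unfolding c_def by simp
qed

theorem theorem5p1:
  fixes n k d :: nat and \<alpha> s :: real
  assumes "0 < k" "k \<le> d" "d < n" "0 < \<alpha>" "0 < s" "s \<le> 1"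
  shows "(\<lambda>M. let kM = k + M; dM = d + M; iM = 1 + s * (real kM - 1) in
            gM n k \<alpha> M iM /
            capC kM dM \<alpha> ((real dM - real kM + iM) * \<alpha> / (real dM - real kM + 1)))
         \<longlonglongrightarrow> 1"
proof -
  define a where "a = real d - real k"
  have a0: "0 \<le> a" using assms unfolding a_def by simp
  define c where "c = real n - real k"
  have c0: "0 < c" using assms unfolding c_def by simp
  define B where "B = (a+1)/s + 1"
  have B0: "0 \<le> B" using a0 assms unfolding B_def by simp
  define lo where "lo = (\<lambda>M::nat. (real n + real M) * (s * (real k + real M - 1)) / ((c + s * (real k + real M - 1)) * (real k + real M)))"
  define hi where "hi = (\<lambda>M::nat. (real n + real M) / (real k + real M - B))"
  have lo_lim: "lo \<longlonglongrightarrow> 1" unfolding lo_def using assms c0 by real_asymp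
  have hi_lim: "hi \<longlonglongrightarrow> 1" unfolding hi_def by real_asymp
  define f where "f = (\<lambda>M. let kM = k + M; dM = d + M; iM = 1 + s * (real kM - 1) in
            gM n k \<alpha> M iM /
            capC kM dM \<alpha> ((real dM - real kM + iM) * \<alpha> / (real dM - real kM + 1)))"
  have bounds: "lo M \<le> f M \<and> f M \<le> hi M" if MB: "B < real k + real M" for M
  proof -
    define K where "K = k + M"
    define D where "D = d + M"
    define x where "x = 1 + s * (real K - 1)"
    define \<gamma> where "\<gamma> = (real D - real K + x) * \<alpha> / (real D - real K + 1)"
    have DK: "real D - real K = a" unfolding D_def K_def a_def by simp
    have K1: "1 \<le> real K" using assms unfolding K_def by simp
    have x1: "1 \<le> x" unfolding x_def using K1 assms by simp
    have \<gamma>0: "0 < \<gamma>" unfolding \<gamma>_def DK using a0 x1 assms by simp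
    have KD: "K \<le> D" "0 < D" using assms unfolding K_def D_def by auto
    have cond: "real K - (real D - real D * \<alpha> / \<gamma>) + 1 \<le> B"
    proof -
      have g: "real D * \<alpha> / \<gamma> = real D * (a+1) / (a + x)"
      proof -
        have ne: "a + x \<noteq> 0" "a + 1 \<noteq> 0" "\<alpha> \<noteq> 0" "\<alpha> * a + \<alpha> * x \<noteq> 0"
          using a0 x1 assms by (auto simp: distrib_left[symmetric])
        show ?thesis unfolding \<gamma>_def DK using ne by (simp add: field_simps)
      qed
      have "s * real D \<le> a + x"
      proof -
        have "s * real D = s * real K + s * a" using DK by (simp add: algebra_simps)
        moreover have "s * a \<le> a" using assms a0 by (simp add: mult_left_le_one_le)
        ultimately show ?thesis unfolding x_def using assms by (simp add: algebra_simps)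
      qed
      then have "real D * (a+1) / (a + x) \<le> (a+1)/s"
        using a0 x1 assms by (simp add: divide_simps) (smt (verit) mult_left_mono mult.commute)
      then show ?thesis unfolding g B_def using DK a0 by simp
    qed
    define C where "C = capC K D \<alpha> \<gamma>"
    have Cup: "C \<le> real K * \<alpha>" unfolding C_def using capC_upper assms by blast
    have Clo: "real K * \<alpha> - \<alpha> * B \<le> C" unfolding C_def
      using capC_lower[OF assms(4) \<gamma>0 KD B0 cond] .
    have KB: "0 < real K - B" using MB unfolding K_def by simp
    have Cpos: "0 < \<alpha> * (real K - B)" using KB assms by simp
    have Cge: "\<alpha> * (real K - B) \<le> C" using Clo by (simp add: algebra_simps)
    define g where "g = gM n k \<alpha> M x"
    have glo: "real (n+M) * \<alpha> * ((x-1)/(c+(x-1))) \<le> g"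
      unfolding g_def c_def using gM_bounds(1)[OF _ assms(4) x1] assms by simp
    have ghi: "g \<le> real (n+M) * \<alpha>"
      unfolding g_def using gM_bounds(2)[OF _ assms(4) x1] assms by simp
    have lonn: "0 \<le> real (n+M) * \<alpha> * ((x-1)/(c+(x-1)))"
      using x1 c0 assms by simp
    have fM: "f M = g / C" unfolding f_def g_def C_def K_def D_def x_def \<gamma>_def Let_def by simp
    have "lo M = (real (n+M) * ((x-1)/(c+(x-1)))) / real K"
      unfolding lo_def x_def K_def by simp
    also have "\<dots> = (real (n+M) * \<alpha> * ((x-1)/(c+(x-1)))) / (real K * \<alpha>)"
      using assms by simp
    also have "\<dots> \<le> g / (real K * \<alpha>)"
      using glo K1 assms by (intro divide_right_mono) auto
    also have "\<dots> \<le> g / C"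
      using Cup Cpos Cge lonn glo by (intro divide_left_mono) auto
    finally have L: "lo M \<le> f M" using fM by simp
    have "g / C \<le> (real (n+M) * \<alpha>) / C"
      using ghi Cpos Cge by (intro divide_right_mono) auto
    also have "\<dots> \<le> (real (n+M) * \<alpha>) / (\<alpha> * (real K - B))"
      using Cpos Cge assms by (intro divide_left_mono) auto
    also have "\<dots> = hi M" unfolding hi_def K_def using assms by simp
    finally show ?thesis using L fM by simp
  qed
  have ev: "eventually (\<lambda>M. lo M \<le> f M \<and> f M \<le> hi M) sequentially"
  proof (rule eventually_sequentiallyI[of "nat \<lceil>B\<rceil> + 1"])
    fix M assume "nat \<lceil>B\<rceil> + 1 \<le> M"
    then have "B < real k + real M" by linarith
    then show "lo M \<le> f M \<and> f M \<le> hi M" by (rule bounds)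
  qed
  have "f \<longlonglongrightarrow> 1"
    by (rule tendsto_sandwich[OF _ _ lo_lim hi_lim]) (use ev in \<open>auto elim: eventually_mono\<close>)
  then show ?thesis unfolding f_def .
qed

end
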